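(* Let $X_1, X_2, \dots$ be i.i.d. random variables with $\mathbb{P}(X_1 = l) = p_l$ for $l \in \mathbb{Z}^+$. Fix integers $k \ge 1$ and $0 \le j \le k$, and let $n \ge k+1$. Then \[ \mathbb{P}(X_n \in R_j^k) = \sum_{i} \binom{k}{j} S_i^{j} (C_{i-1})^{k-j} p_i , \] and consequently, for every $i \in \mathbb{Z}^+$, \[ q_i := \mathbb{P}(X_n = i \mid X_n \in R_j^k) = \frac{\binom{k}{j} S_i^j (C_{i-1})^{k-j} p_i}{\sum_{l} \binom{k}{j} S_l^{j} (C_{l-1})^{k-j} p_l}. \]
   Context: For $i \in \mathbb{Z}^+$, $S_i = \mathbb{P}(X_1 \ge i) = \sum_{s \ge i} p_s$ and $C_i = \mathbb{P}(X_1 \le i) = \sum_{l=1}^{i} p_l$, with $C_0 = 0$ (so $S_i + C_{i-1} = 1$); sums over $i$ or $l$ range over $\mathbb{Z}^+$, and $0^0 = 1$. For $n \ge k+1$, $X_n$ is called a $j$-recent-$k$-record, written $X_n \in R_j^k$, if exactly $j$ of the $k$ values $X_{n-k}, X_{n-k+1}, \dots, X_{n-1}$ are at least as large as $X_n$, i.e. $|\{p : 1 \le p \le k,\ X_{n-p} \ge X_n\}| = j$. *)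

theory Defs
  imports "HOL-Probability.Probability"
begin

definition tailS :: "(nat \<Rightarrow> real) \<Rightarrow> nat \<Rightarrow> real" where
  "tailS p i = (\<Sum>s. p (s + i))"

text \<open>Cumulative probability C_i = P(X_1 <= i) = sum over 1 <= l <= i of p_l (so C_0 = 0).\<close>
definition cumC :: "(nat \<Rightarrow> real) \<Rightarrow> nat \<Rightarrow> real" where
  "cumC p i = (\<Sum>l\<in>{1..i}. p l)"

definition recent_record :: "(nat \<Rightarrow> 'a \<Rightarrow> nat) \<Rightarrow> nat \<Rightarrow> nat \<Rightarrow> nat \<Rightarrow> 'a \<Rightarrow> bool" where
  "recent_record X j k n \<omega> \<longleftrightarrow> card {q \<in> {1..k}. X (n - q) \<omega> \<ge> X n \<omega>} = j"

end

theory Submission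
  imports Defs
begin

locale rr_setting = prob_space M
  for M :: "'a measure" and X :: "nat \<Rightarrow> 'a \<Rightarrow> nat" and p :: "nat \<Rightarrow> real" and k n :: nat +
  assumes meas: "\<And>m. m \<ge> 1 \<Longrightarrow> X m \<in> measurable M (count_space UNIV)"
    and indep: "indep_vars (\<lambda>_. count_space UNIV) X {1..}"
    and distr: "\<And>m l. m \<ge> 1 \<Longrightarrow> l \<ge> 1 \<Longrightarrow> measure M {\<omega> \<in> space M. X m \<omega> = l} = p l"
    and pos: "\<And>m. m \<ge> 1 \<Longrightarrow> (AE \<omega> in M. X m \<omega> \<ge> 1)"
    and k1: "k \<ge> 1" and nk: "n \<ge> k + 1"
begin

lemma evs: "m \<ge> 1 \<Longrightarrow> {\<omega> \<in> space M. P (X m \<omega>)} \<in> events"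
proof -
  assume "m \<ge> 1"
  have "X m -` {x. P x} \<inter> space M \<in> sets M"
    using measurable_sets[OF meas[OF \<open>m \<ge> 1\<close>], of "{x. P x}"] by simp
  moreover have "X m -` {x. P x} \<inter> space M = {\<omega> \<in> space M. P (X m \<omega>)}" by auto
  ultimately show ?thesis by simp
qed

lemma zero_null: "m \<ge> 1 \<Longrightarrow> {\<omega> \<in> space M. X m \<omega> = 0} \<in> null_sets M"
proof -
  assume m: "m \<ge> 1"
  have "emeasure M {\<omega> \<in> space M. X m \<omega> = 0} = 0"
  proof -
    have "{x\<in>space M. \<not> (1 \<le> X m x)} = {\<omega> \<in> space M. X m \<omega> = 0}" by auto
    then have "(AE \<omega> in M. 1 \<le> X m \<omega>) \<longleftrightarrow> emeasure M {\<omega> \<in> space M. X m \<omega> = 0} = 0"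
      by (rule AE_iff_measurable[OF evs[OF m]])
    then show ?thesis using pos[OF m] by simp
  qed
  then show ?thesis using evs[OF m] by auto
qed

lemma zero_meas: "m \<ge> 1 \<Longrightarrow> measure M {\<omega> \<in> space M. X m \<omega> = 0} = 0"
  using zero_null by (simp add: measure_def null_setsD1)

lemma tail: assumes m: "m \<ge> 1" and i: "i \<ge> 1"
  shows "measure M {\<omega> \<in> space M. i \<le> X m \<omega>} = tailS p i"
proof -
  have "(\<lambda>s. measure M {\<omega> \<in> space M. X m \<omega> = s+i}) sums measure M (\<Union>s. {\<omega> \<in> space M. X m \<omega> = s+i})"
    by (rule finite_measure_UNION) (auto simp: disjoint_family_on_def intro: evs[OF m])
  moreover have "(\<Union>s. {\<omega> \<in> space M. X m \<omega> = s+i}) = {\<omega> \<in> space M. i \<le> X m \<omega>}"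
  proof (intro equalityI subsetI)
    fix \<omega> assume "\<omega> \<in> {\<omega> \<in> space M. i \<le> X m \<omega>}"
    then show "\<omega> \<in> (\<Union>s. {\<omega> \<in> space M. X m \<omega> = s+i})"
      by (auto intro!: exI[of _ "X m \<omega> - i"])
  qed auto
  moreover have "\<And>s. measure M {\<omega> \<in> space M. X m \<omega> = s+i} = p (s+i)"
    using distr[OF m] i by simp
  ultimately show ?thesis unfolding tailS_def by (simp add: sums_unique)
qed

lemma cum: assumes m: "m \<ge> 1" and i: "i \<ge> 1"
  shows "measure M {\<omega> \<in> space M. X m \<omega> < i} = cumC p (i - 1)"
proof -
  have "measure M (\<Union>l\<in>{..<i}. {\<omega> \<in> space M. X m \<omega> = l}) = (\<Sum>l\<in>{..<i}. measure M {\<omega> \<in> space M. X m \<omega> = l})"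
    by (rule finite_measure_finite_Union) (auto simp: disjoint_family_on_def intro: evs[OF m])
  moreover have "(\<Union>l\<in>{..<i}. {\<omega> \<in> space M. X m \<omega> = l}) = {\<omega> \<in> space M. X m \<omega> < i}" by auto
  moreover have "{..<i} = insert 0 {1..i-1}" using i by auto
  ultimately have "measure M {\<omega> \<in> space M. X m \<omega> < i} = measure M {\<omega> \<in> space M. X m \<omega> = 0} + (\<Sum>l\<in>{1..i-1}. measure M {\<omega> \<in> space M. X m \<omega> = l})"
    by simp
  also have "\<dots> = cumC p (i - 1)" unfolding cumC_def using zero_meas[OF m] distr[OF m] by simp
  finally show ?thesis .
qed


lemma EA_prob: assumes i: "i \<ge> 1" and A: "A \<subseteq> {1..k}"
  shows "measure M {\<omega>\<in>space M. X n \<omega> = i \<and> (\<forall>q\<in>{1..k}. q\<in>A \<longleftrightarrow> i \<le> X (n-q) \<omega>)}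
    = p i * tailS p i ^ card A * cumC p (i-1) ^ (k - card A)"
proof -
  define J' where "J' = (\<lambda>q. n - q) ` {1..k}"
  define J where "J = insert n J'"
  define Y where "Y m = (if m = n then {i} else if n - m \<in> A then {i..} else {..<i})" for m
  define G where "G m = X m -` Y m \<inter> space M" for m
  have inj: "inj_on (\<lambda>q. n-q) {1..k}" using nk by (auto simp: inj_on_def)
  have nJ': "n \<notin> J'" using nk by (auto simp: J'_def)
  have J1: "J \<subseteq> {1..}" using nk by (auto simp: J_def J'_def)
  have finJ: "finite J" by (simp add: J_def J'_def)
  from indep have "indep_sets (\<lambda>m. {X m -` B \<inter> space M | B. B \<in> sets (count_space UNIV)}) {1..}"
    by (simp add: indep_vars_def2)
  then have all: "\<forall>J\<subseteq>{1..}. J \<noteq> {} \<longrightarrow> finite J \<longrightarrow> (\<forall>A\<in>Pi J (\<lambda>m. {X m -` B \<inter> space M | B. B \<in> sets (count_space UNIV)}). prob (\<Inter>j\<in>J. A j) = (\<Prod>j\<in>J. prob (A j)))"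
    by (simp add: indep_sets_def)
  have GP: "G \<in> Pi J (\<lambda>m. {X m -` B \<inter> space M | B. B \<in> sets (count_space UNIV)})"
    by (auto simp: G_def)
  have P: "prob (\<Inter>m\<in>J. G m) = (\<Prod>m\<in>J. prob (G m))"
  proof -
    have "J \<noteq> {}" by (simp add: J_def)
    then show ?thesis using all J1 finJ GP by blast
  qed
  have E: "{\<omega>\<in>space M. X n \<omega> = i \<and> (\<forall>q\<in>{1..k}. q\<in>A \<longleftrightarrow> i \<le> X (n-q) \<omega>)} = (\<Inter>m\<in>J. G m)"
  proof (intro equalityI subsetI)
    fix \<omega> assume w: "\<omega> \<in> {\<omega>\<in>space M. X n \<omega> = i \<and> (\<forall>q\<in>{1..k}. q\<in>A \<longleftrightarrow> i \<le> X (n-q) \<omega>)}"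
    show "\<omega> \<in> (\<Inter>m\<in>J. G m)"
    proof
      fix m assume "m \<in> J"
      then consider "m = n" | q where "q \<in> {1..k}" "m = n - q" by (auto simp: J_def J'_def)
      then show "\<omega> \<in> G m"
      proof cases
        case 1 then show ?thesis using w by (simp add: G_def Y_def)
      next
        case 2
        then have "n - q \<noteq> n" "n - (n-q) = q" using nk by auto
        then show ?thesis using w 2 by (auto simp: G_def Y_def)
      qed
    qed
  next
    fix \<omega> assume w: "\<omega> \<in> (\<Inter>m\<in>J. G m)"
    then have "\<omega> \<in> G n" by (simp add: J_def)
    then have 1: "\<omega> \<in> space M" "X n \<omega> = i" by (auto simp: G_def Y_def)
    have 2: "q\<in>A \<longleftrightarrow> i \<le> X (n-q) \<omega>" if "q\<in>{1..k}" for q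
    proof -
      have "n-q \<in> J" using that by (simp add: J_def J'_def)
      with w have "\<omega> \<in> G (n-q)" by blast
      moreover have "n - q \<noteq> n" "n - (n-q) = q" using that nk by auto
      ultimately show ?thesis by (auto simp: G_def Y_def split: if_splits)
    qed
    show "\<omega> \<in> {\<omega>\<in>space M. X n \<omega> = i \<and> (\<forall>q\<in>{1..k}. q\<in>A \<longleftrightarrow> i \<le> X (n-q) \<omega>)}"
      using 1 2 by auto
  qed
  have Gn: "prob (G n) = p i"
  proof -
    have "G n = {\<omega>\<in>space M. X n \<omega> = i}" by (auto simp: G_def Y_def)
    then show ?thesis using distr[of n i] i nk by simp
  qed
  have GJ': "prob (G (n-q)) = (if q \<in> A then tailS p i else cumC p (i-1))" if q: "q\<in>{1..k}" for q
  proof -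
    have nq: "n - q \<noteq> n" "n - (n-q) = q" "n - q \<ge> 1" using q nk by auto
    show ?thesis
    proof (cases "q \<in> A")
      case True
      then have "G (n-q) = {\<omega>\<in>space M. i \<le> X (n-q) \<omega>}" using nq by (auto simp: G_def Y_def)
      then show ?thesis using tail[OF nq(3) i] True by simp
    next
      case False
      then have "G (n-q) = {\<omega>\<in>space M. X (n-q) \<omega> < i}" using nq by (auto simp: G_def Y_def)
      then show ?thesis using cum[OF nq(3) i] False by simp
    qed
  qed
  have "(\<Prod>m\<in>J. prob (G m)) = p i * (\<Prod>m\<in>J'. prob (G m))"
    using nJ' Gn by (simp add: J_def J'_def)
  also have "(\<Prod>m\<in>J'. prob (G m)) = (\<Prod>q\<in>{1..k}. prob (G (n-q)))"
    unfolding J'_def using prod.reindex[OF inj] by simp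
  also have "\<dots> = (\<Prod>q\<in>{1..k}. if q \<in> A then tailS p i else cumC p (i-1))"
    using GJ' by (rule prod.cong[OF refl])
  also have "\<dots> = (\<Prod>q\<in>{1..k} \<inter> {q. q \<in> A}. tailS p i) * (\<Prod>q\<in>{1..k} \<inter> - {q. q \<in> A}. cumC p (i-1))"
    by (rule prod.If_cases) simp
  also have "\<dots> = tailS p i ^ card A * cumC p (i-1) ^ (k - card A)"
  proof -
    have "{1..k} \<inter> {q. q \<in> A} = A" using A by auto
    moreover have "{1..k} \<inter> - {q. q \<in> A} = {1..k} - A" by auto
    moreover have "card ({1..k} - A) = k - card A" using A by (simp add: card_Diff_subset finite_subset)
    ultimately show ?thesis by simp
  qed
  finally show ?thesis using E P by simp
qed


definition EE :: "nat set \<Rightarrow> nat \<Rightarrow> 'a set" where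
  "EE A i = {\<omega>\<in>space M. X n \<omega> = i \<and> (\<forall>q\<in>{1..k}. q\<in>A \<longleftrightarrow> i \<le> X (n-q) \<omega>)}"

lemma EE_sets: "EE A i \<in> events"
proof -
  have "EE A i = {\<omega>\<in>space M. X n \<omega> = i} \<inter> (\<Inter>q\<in>{1..k}. {\<omega>\<in>space M. q\<in>A \<longleftrightarrow> i \<le> X (n-q) \<omega>})"
    using k1 by (auto simp: EE_def)
  moreover have "(\<Inter>q\<in>{1..k}. {\<omega>\<in>space M. q\<in>A \<longleftrightarrow> i \<le> X (n-q) \<omega>}) \<in> events"
  proof (rule sets.finite_INT)
    show "{1..k} \<noteq> {}" using k1 by simp
    fix q assume "q \<in> {1..k}"
    then have "n - q \<ge> 1" using nk by auto
    then show "{\<omega>\<in>space M. q\<in>A \<longleftrightarrow> i \<le> X (n-q) \<omega>} \<in> events" by (rule evs)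
  qed simp
  moreover have "{\<omega>\<in>space M. X n \<omega> = i} \<in> events" using nk by (intro evs) simp
  ultimately show ?thesis by simp
qed

lemma F_union: "{\<omega>\<in>space M. X n \<omega> = i \<and> recent_record X j k n \<omega>} = (\<Union>A\<in>{A. A \<subseteq> {1..k} \<and> card A = j}. EE A i)"
proof (intro equalityI subsetI)
  fix \<omega> assume w: "\<omega> \<in> {\<omega>\<in>space M. X n \<omega> = i \<and> recent_record X j k n \<omega>}"
  define A where "A = {q\<in>{1..k}. i \<le> X (n-q) \<omega>}"
  have "A \<in> {A. A \<subseteq> {1..k} \<and> card A = j}" using w by (auto simp: A_def recent_record_def)
  moreover have "\<omega> \<in> EE A i" using w by (auto simp: A_def EE_def)
  ultimately show "\<omega> \<in> (\<Union>A\<in>{A. A \<subseteq> {1..k} \<and> card A = j}. EE A i)" by blast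
next
  fix \<omega> assume "\<omega> \<in> (\<Union>A\<in>{A. A \<subseteq> {1..k} \<and> card A = j}. EE A i)"
  then obtain A where A: "A \<subseteq> {1..k}" "card A = j" and w: "\<omega> \<in> EE A i" by blast
  have "{q\<in>{1..k}. X n \<omega> \<le> X (n-q) \<omega>} = A" using A w by (auto simp: EE_def)
  then show "\<omega> \<in> {\<omega>\<in>space M. X n \<omega> = i \<and> recent_record X j k n \<omega>}"
    using A w by (auto simp: EE_def recent_record_def)
qed

lemma F_sets: "{\<omega>\<in>space M. X n \<omega> = i \<and> recent_record X j k n \<omega>} \<in> events"
  unfolding F_union by (rule sets.finite_UN) (auto intro: EE_sets finite_subset[of _ "Pow {1..k}"])

lemma F_meas: assumes i: "i \<ge> 1"
  shows "measure M {\<omega>\<in>space M. X n \<omega> = i \<and> recent_record X j k n \<omega>}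
    = real (k choose j) * tailS p i ^ j * cumC p (i - 1) ^ (k - j) * p i"
proof -
  let ?S = "{A. A \<subseteq> {1..k} \<and> card A = j}"
  have fin: "finite ?S" by (rule finite_subset[of _ "Pow {1..k}"]) auto
  have disj: "disjoint_family_on (\<lambda>A. EE A i) ?S"
  proof (unfold disjoint_family_on_def, intro ballI impI)
    fix A B assume A: "A \<in> ?S" and B: "B \<in> ?S" and ne: "A \<noteq> B"
    show "EE A i \<inter> EE B i = {}"
    proof (rule ccontr)
      assume "EE A i \<inter> EE B i \<noteq> {}"
      then obtain \<omega> where "\<omega> \<in> EE A i" "\<omega> \<in> EE B i" by blast
      then have "\<forall>q\<in>{1..k}. q \<in> A \<longleftrightarrow> q \<in> B" by (auto simp: EE_def)
      with A B have "A = B" by blast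
      with ne show False by simp
    qed
  qed
  have "measure M (\<Union>A\<in>?S. EE A i) = (\<Sum>A\<in>?S. measure M (EE A i))"
    by (rule finite_measure_finite_Union[OF fin _ disj]) (auto intro: EE_sets)
  also have "\<dots> = (\<Sum>A\<in>?S. p i * tailS p i ^ j * cumC p (i-1) ^ (k - j))"
  proof (rule sum.cong[OF refl])
    fix A assume "A \<in> ?S"
    then have "A \<subseteq> {1..k}" "card A = j" by auto
    then show "measure M (EE A i) = p i * tailS p i ^ j * cumC p (i-1) ^ (k - j)"
      using EA_prob[OF i, of A] unfolding EE_def by simp
  qed
  also have "\<dots> = real (card ?S) * (p i * tailS p i ^ j * cumC p (i-1) ^ (k - j))" by simp
  also have "card ?S = k choose j" using n_subsets[of "{1..k}" j] by simp
  finally show ?thesis unfolding F_union by (simp add: mult_ac)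
qed


lemma total: "measure M {\<omega>\<in>space M. recent_record X j k n \<omega>}
   = (\<Sum>i. measure M {\<omega>\<in>space M. X n \<omega> = Suc i \<and> recent_record X j k n \<omega>})"
proof -
  let ?F = "\<lambda>i. {\<omega>\<in>space M. X n \<omega> = i \<and> recent_record X j k n \<omega>}"
  have "(\<lambda>i. measure M (?F (Suc i))) sums measure M (\<Union>i. ?F (Suc i))"
    by (rule finite_measure_UNION) (auto simp: disjoint_family_on_def intro: F_sets)
  moreover have "{\<omega>\<in>space M. recent_record X j k n \<omega>} = (\<Union>i. ?F (Suc i)) \<union> ?F 0"
  proof (intro equalityI subsetI)
    fix \<omega> assume w: "\<omega> \<in> {\<omega>\<in>space M. recent_record X j k n \<omega>}"
    show "\<omega> \<in> (\<Union>i. ?F (Suc i)) \<union> ?F 0"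
    proof (cases "X n \<omega>")
      case 0 then show ?thesis using w by simp
    next
      case (Suc m) then show ?thesis using w by blast
    qed
  qed auto
  moreover have "measure M ((\<Union>i. ?F (Suc i)) \<union> ?F 0) = measure M (\<Union>i. ?F (Suc i))"
  proof (rule measure_Un_null_set)
    show "(\<Union>i. ?F (Suc i)) \<in> events" by (intro sets.countable_UN) (auto intro: F_sets)
    have "?F 0 \<inter> {\<omega>\<in>space M. X n \<omega> = 0} \<in> null_sets M"
      by (rule null_set_Int1[OF zero_null F_sets]) (use nk in simp)
    moreover have "?F 0 \<inter> {\<omega>\<in>space M. X n \<omega> = 0} = ?F 0" by auto
    ultimately show "?F 0 \<in> null_sets M" by simp
  qed
  ultimately show ?thesis by (simp add: sums_unique)
qed

end


theorem theorem2:
  fixes M :: "'a measure" and X :: "nat \<Rightarrow> 'a \<Rightarrow> nat" and p :: "nat \<Rightarrow> real"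
    and k j n :: nat
  assumes "prob_space M"
    and meas: "\<And>m. m \<ge> 1 \<Longrightarrow> X m \<in> measurable M (count_space UNIV)"
    and indep: "prob_space.indep_vars M (\<lambda>_. count_space UNIV) X {1..}"
    and distr: "\<And>m l. m \<ge> 1 \<Longrightarrow> l \<ge> 1 \<Longrightarrow> measure M {\<omega> \<in> space M. X m \<omega> = l} = p l"
    and pos: "\<And>m. m \<ge> 1 \<Longrightarrow> (AE \<omega> in M. X m \<omega> \<ge> 1)"
    and "k \<ge> 1" and "j \<le> k" and "n \<ge> k + 1"
  shows "measure M {\<omega> \<in> space M. recent_record X j k n \<omega>}
           = (\<Sum>i. real (k choose j) * tailS p (Suc i) ^ j * cumC p i ^ (k - j) * p (Suc i))
     \<and> (\<forall>i \<ge> 1.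
           measure M {\<omega> \<in> space M. X n \<omega> = i \<and> recent_record X j k n \<omega>}
             / measure M {\<omega> \<in> space M. recent_record X j k n \<omega>}
           = (real (k choose j) * tailS p i ^ j * cumC p (i - 1) ^ (k - j) * p i)
             / (\<Sum>l. real (k choose j) * tailS p (Suc l) ^ j * cumC p l ^ (k - j) * p (Suc l)))"
proof -
  have "rr_setting M X p k n"
    apply (rule rr_setting.intro[OF assms(1)])
    apply (rule rr_setting_axioms.intro)
    using assms by simp_all
  then interpret rr_setting M X p k n .
  have 1: "measure M {\<omega> \<in> space M. recent_record X j k n \<omega>}
           = (\<Sum>i. real (k choose j) * tailS p (Suc i) ^ j * cumC p i ^ (k - j) * p (Suc i))"
  proof -
    have "\<And>i. measure M {\<omega>\<in>space M. X n \<omega> = Suc i \<and> recent_record X j k n \<omega>}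
      = real (k choose j) * tailS p (Suc i) ^ j * cumC p i ^ (k - j) * p (Suc i)"
      using F_meas by simp
    then show ?thesis unfolding total by simp
  qed
  have 2: "\<forall>i \<ge> 1.
           measure M {\<omega> \<in> space M. X n \<omega> = i \<and> recent_record X j k n \<omega>}
             / measure M {\<omega> \<in> space M. recent_record X j k n \<omega>}
           = (real (k choose j) * tailS p i ^ j * cumC p (i - 1) ^ (k - j) * p i)
             / (\<Sum>l. real (k choose j) * tailS p (Suc l) ^ j * cumC p l ^ (k - j) * p (Suc l))"
  proof (intro allI impI)
    fix i :: nat assume "i \<ge> 1"
    then show "measure M {\<omega> \<in> space M. X n \<omega> = i \<and> recent_record X j k n \<omega>}
             / measure M {\<omega> \<in> space M. recent_record X j k n \<omega>}
           = (real (k choose j) * tailS p i ^ j * cumC p (i - 1) ^ (k - j) * p i)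
             / (\<Sum>l. real (k choose j) * tailS p (Suc l) ^ j * cumC p l ^ (k - j) * p (Suc l))"
      unfolding 1 by (subst F_meas) simp_all
  qed
  show ?thesis using 1 2 by blast
qed

end
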